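(* Let $A\in\mathbb{C}^{m\times n}$, $B\in\mathbb{C}^{n\times p}$, $C\in\mathbb{C}^{p\times q}$ and $M=ABC$. Then each of the following sets is contained in $\{M^{(1,2)}\}$: $\{(A^{(1,2)}M)^{(1,2)}A^{(1,2)}\}$, $\{C^{(1,2)}(MC^{(1,2)})^{(1,2)}\}$, $\{(A^{*}M)^{(1,2)}A^{*}\}$, $\{C^{*}(MC^{*})^{(1,2)}\}$, $\{(AA^{*}M)^{(1,2)}AA^{*}\}$, $\{C^{*}C(MC^{*}C)^{(1,2)}\}$, $\{C^{(1,2)}(A^{(1,2)}MC^{(1,2)})^{(1,2)}A^{(1,2)}\}$, $\{C^{*}(A^{*}MC^{*})^{(1,2)}A^{*}\}$, $\{[(AB)^{(1,2)}M]^{(1,2)}(AB)^{(1,2)}\}$, $\{(BC)^{(1,2)}[M(BC)^{(1,2)}]^{(1,2)}\}$, $\{[(AB)^{*}M]^{(1,2)}(AB)^{*}\}$, $\{(BC)^{*}[M(BC)^{*}]^{(1,2)}\}$, $\{[(ABB^{(1,2)})^{(1,2)}M]^{(1,2)}(ABB^{(1,2)})^{(1,2)}\}$, $\{(B^{(1,2)}BC)^{(1,2)}[M(B^{(1,2)}BC)^{(1,2)}]^{(1,2)}\}$, $\{[(ABB^{*})^{(1,2)}M]^{(1,2)}(ABB^{*})^{(1,2)}\}$, $\{(B^{*}BC)^{(1,2)}[M(B^{*}BC)^{(1,2)}]^{(1,2)}\}$, $\{C^{*}C(AA^{*}MC^{*}C)^{(1,2)}AA^{*}\}$, $\{(BC)^{(1,2)}[(AB)^{(1,2)}M(BC)^{(1,2)}]^{(1,2)}(AB)^{(1,2)}\}$,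 $\{(BC)^{*}[(AB)^{*}M(BC)^{*}]^{(1,2)}(AB)^{*}\}$, $\{(B^{(1,2)}BC)^{(1,2)}[(ABB^{(1,2)})^{(1,2)}M(B^{(1,2)}BC)^{(1,2)}]^{(1,2)}(ABB^{(1,2)})^{(1,2)}\}$, $\{(B^{(1,2)}BC)^{*}[(ABB^{(1,2)})^{*}M(B^{(1,2)}BC)^{*}]^{(1,2)}(ABB^{(1,2)})^{*}\}$, $\{(B^{*}BC)^{(1,2)}[(ABB^{*})^{(1,2)}M(B^{*}BC)^{(1,2)}]^{(1,2)}(ABB^{*})^{(1,2)}\}$, $\{(B^{*}BC)^{*}[(ABB^{*})^{*}M(B^{*}BC)^{*}]^{(1,2)}(ABB^{*})^{*}\}$.
   Context: For a complex matrix $X$, $X^*$ is its conjugate transpose. For $X\in\mathbb{C}^{p\times q}$, a matrix $G\in\mathbb{C}^{q\times p}$ is called an $\{i,\ldots,j\}$-generalized inverse of $X$ (written $X^{(i,\ldots,j)}$) if it satisfies the equations numbered $i,\ldots,j$ among the four Penrose equations (i) $XGX=X$, (ii) $GXG=G$, (iii) $(XG)^*=XG$, (iv) $(GX)^*=GX$; $\{X^{(i,\ldots,j)}\}$ denotes the set of all such $G$. For a matrix expression involving generalized inverses, $\{\cdot\}$ denotes the set of all values of the expression as each generalized inverse occurring in it ranges over all admissible choices; repeated occurrences of the same symbol (e.g. $(AB)^{(1,2)}$ appearing twice) denote one and the same choice, and a generalized inverse of a matrix that itself contains a chosen generalized inverse is taken with respect to that chosen matrix. *)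

theory Defs
  imports "HOL-Analysis.Analysis"
begin

definition cstar :: "complex^'n^'m \<Rightarrow> complex^'m^'n" where
  "cstar X = (\<chi> i j. cnj (X $ j $ i))"

definition inv12 :: "complex^'n^'m \<Rightarrow> (complex^'m^'n) set" where
  "inv12 X = {G. X ** G ** X = X \<and> G ** X ** G = G}"

end

theory Submission imports Defs begin

lemma cstar_mult: "cstar (X ** Y) = cstar Y ** cstar X"
  by (simp add: cstar_def matrix_matrix_mult_def vec_eq_iff mult.commute)

lemma cstar_cstar[simp]: "cstar (cstar X) = X"
  by (simp add: cstar_def vec_eq_iff)

lemma matrix_diff_ldistrib: "(A::'a::ring_1^'n^'m) ** (B - C) = A ** B - A ** C"
  by (simp add: matrix_matrix_mult_def vec_eq_iff sum_subtractf right_diff_distrib)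

lemma matrix_diff_rdistrib: "((B::'a::ring_1^'n^'m) - C) ** A = B ** A - C ** A"
  by (simp add: matrix_matrix_mult_def vec_eq_iff sum_subtractf left_diff_distrib)

lemma cstar_zero: "cstar Z ** Z = 0 \<Longrightarrow> Z = 0"
proof -
  assume h: "cstar Z ** Z = 0"
  show "Z = 0"
  proof (simp add: vec_eq_iff, intro allI)
    fix i j
    have "(cstar Z ** Z) $ j $ j = (\<Sum>k\<in>UNIV. cnj (Z$k$j) * Z$k$j)"
      by (simp add: cstar_def matrix_matrix_mult_def)
    also have "\<dots> = of_real (\<Sum>k\<in>UNIV. (cmod (Z$k$j))^2)"
      unfolding of_real_sum complex_norm_square by (simp add: mult.commute)
    finally have "complex_of_real (\<Sum>k\<in>UNIV. (cmod (Z$k$j))^2) = 0" using h by (metis zero_index)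
    hence "(\<Sum>k\<in>UNIV. (cmod (Z$k$j))^2) = 0" by (simp only: of_real_eq_0_iff)
    hence "\<forall>k\<in>UNIV. (cmod (Z$k$j))^2 = 0"
      by (subst (asm) sum_nonneg_eq_0_iff) auto
    thus "Z $ i $ j = 0" by simp
  qed
qed

lemma cl_star: "cstar K ** (K ** W1) = cstar K ** (K ** W2) \<Longrightarrow> K ** W1 = K ** W2"
proof -
  assume h: "cstar K ** (K ** W1) = cstar K ** (K ** W2)"
  have "cstar K ** (K ** (W1 - W2)) = 0" using h by (simp add: matrix_diff_ldistrib)
  hence "cstar (K ** (W1 - W2)) ** (K ** (W1 - W2)) = 0"
    by (simp add: cstar_mult matrix_mul_assoc[symmetric])
  hence "K ** (W1 - W2) = 0" by (rule cstar_zero)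
  thus ?thesis by (simp add: matrix_diff_ldistrib)
qed

lemma cr_star: "W1 ** K ** cstar K = W2 ** K ** cstar K \<Longrightarrow> W1 ** K = W2 ** K"
proof -
  assume h: "W1 ** K ** cstar K = W2 ** K ** cstar K"
  have "(W1 - W2) ** K ** cstar K = 0" using h by (simp add: matrix_diff_rdistrib)
  hence "cstar (cstar ((W1 - W2) ** K)) ** cstar ((W1 - W2) ** K) = 0"
    by (simp add: cstar_mult matrix_mul_assoc)
  hence "cstar ((W1 - W2) ** K) = 0" by (rule cstar_zero)
  hence "cstar (cstar ((W1 - W2) ** K)) = 0" by (simp add: cstar_def vec_eq_iff)
  thus ?thesis by (simp add: matrix_diff_rdistrib)
qed

lemma cl_inv: "X \<in> inv12 K \<Longrightarrow> X ** (K ** W1) = X ** (K ** W2) \<Longrightarrow> K ** W1 = K ** W2"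
proof -
  assume hX: "X \<in> inv12 K" and h: "X ** (K ** W1) = X ** (K ** W2)"
  have k: "K ** X ** K = K" using hX by (simp add: inv12_def)
  have "K ** W1 = K ** (X ** (K ** W1))" by (simp add: matrix_mul_assoc k)
  also have "\<dots> = K ** (X ** (K ** W2))" by (simp add: h)
  also have "\<dots> = K ** W2" by (simp add: matrix_mul_assoc k)
  finally show ?thesis .
qed

lemma cr_inv: "X \<in> inv12 K \<Longrightarrow> W1 ** K ** X = W2 ** K ** X \<Longrightarrow> W1 ** K = W2 ** K"
proof -
  assume hX: "X \<in> inv12 K" and h: "W1 ** K ** X = W2 ** K ** X"
  have k: "K ** X ** K = K" using hX by (simp add: inv12_def)
  have "W1 ** K = W1 ** (K ** X ** K)" by (simp add: k)
  also have "\<dots> = W1 ** K ** X ** K" by (simp add: matrix_mul_assoc)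
  also have "\<dots> = W2 ** K ** X ** K" by (simp add: h)
  also have "\<dots> = W2 ** (K ** X ** K)" by (simp add: matrix_mul_assoc)
  also have "\<dots> = W2 ** K" by (simp add: k)
  finally show ?thesis .
qed

lemma cl_AAs: "(A ** cstar A) ** (A ** W1) = (A ** cstar A) ** (A ** W2) \<Longrightarrow> A ** W1 = A ** W2"
proof -
  assume h: "(A ** cstar A) ** (A ** W1) = (A ** cstar A) ** (A ** W2)"
  have "cstar (cstar A) ** (cstar A ** (A ** W1)) = cstar (cstar A) ** (cstar A ** (A ** W2))"
    using h by (simp add: matrix_mul_assoc)
  hence "cstar A ** (A ** W1) = cstar A ** (A ** W2)" by (rule cl_star)
  thus ?thesis by (rule cl_star)
qed

lemma cr_CsC: "W1 ** C ** (cstar C ** C) = W2 ** C ** (cstar C ** C) \<Longrightarrow> W1 ** C = W2 ** C"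
proof -
  assume h: "W1 ** C ** (cstar C ** C) = W2 ** C ** (cstar C ** C)"
  have "(W1 ** C) ** cstar C ** cstar (cstar C) = (W2 ** C) ** cstar C ** cstar (cstar C)"
    using h by (simp add: matrix_mul_assoc)
  hence "W1 ** C ** cstar C = W2 ** C ** cstar C" by (rule cr_star)
  thus ?thesis by (rule cr_star)
qed

lemma cl_XABBs:
  assumes hX: "X \<in> inv12 (A ** B ** cstar B)"
    and h: "X ** ((A ** B) ** W1) = X ** ((A ** B) ** W2)"
  shows "(A ** B) ** W1 = (A ** B) ** W2"
proof -
  have k: "A ** B ** cstar B ** X ** (A ** B ** cstar B) = A ** B ** cstar B"
    using hX by (simp add: inv12_def)
  have "(A ** B ** cstar B ** X ** A) ** B ** cstar B = A ** B ** cstar B"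
    using k by (simp add: matrix_mul_assoc)
  hence "(A ** B ** cstar B ** X ** A) ** B = A ** B" by (rule cr_star)
  hence t: "A ** B ** cstar B ** X ** (A ** B) = A ** B" by (simp add: matrix_mul_assoc)
  have "(A ** B) ** W1 = (A ** B ** cstar B ** X ** (A ** B)) ** W1" by (simp add: t)
  also have "\<dots> = (A ** B ** cstar B) ** (X ** ((A ** B) ** W1))"
    by (simp add: matrix_mul_assoc)
  also have "\<dots> = (A ** B ** cstar B) ** (X ** ((A ** B) ** W2))" by (simp add: h)
  also have "\<dots> = (A ** B ** cstar B ** X ** (A ** B)) ** W2" by (simp add: matrix_mul_assoc)
  also have "\<dots> = (A ** B) ** W2" by (simp add: t)
  finally show ?thesis .
qed

lemma cr_sBBC:
  assumes hY: "Y \<in> inv12 (cstar B ** B ** C)"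
    and h: "W1 ** (B ** C) ** Y = W2 ** (B ** C) ** Y"
  shows "W1 ** (B ** C) = W2 ** (B ** C)"
proof -
  have k: "cstar B ** B ** C ** Y ** (cstar B ** B ** C) = cstar B ** B ** C"
    using hY by (simp add: inv12_def)
  have "cstar B ** (B ** (C ** Y ** cstar B ** B ** C)) = cstar B ** (B ** C)"
    using k by (simp add: matrix_mul_assoc)
  hence "B ** (C ** Y ** cstar B ** B ** C) = B ** C" by (rule cl_star)
  hence t: "B ** C ** Y ** cstar B ** (B ** C) = B ** C" by (simp add: matrix_mul_assoc)
  have "W1 ** (B ** C) = W1 ** (B ** C ** Y ** cstar B ** (B ** C))" by (simp add: t)
  also have "\<dots> = (W1 ** (B ** C) ** Y) ** (cstar B ** (B ** C))"
    by (simp add: matrix_mul_assoc)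
  also have "\<dots> = (W2 ** (B ** C) ** Y) ** (cstar B ** (B ** C))" by (simp add: h)
  also have "\<dots> = W2 ** (B ** C ** Y ** cstar B ** (B ** C))" by (simp add: matrix_mul_assoc)
  also have "\<dots> = W2 ** (B ** C)" by (simp add: t)
  finally show ?thesis .
qed

lemma cl_sABBs:
  assumes h: "cstar (A ** B ** cstar B) ** ((A ** B) ** W1) = cstar (A ** B ** cstar B) ** ((A ** B) ** W2)"
  shows "(A ** B) ** W1 = (A ** B) ** W2"
proof -
  have "cstar (cstar B) ** (cstar B ** (cstar A ** (A ** B ** W1))) =
        cstar (cstar B) ** (cstar B ** (cstar A ** (A ** B ** W2)))"
    using h by (simp add: matrix_mul_assoc cstar_mult)
  hence "cstar B ** (cstar A ** (A ** B ** W1)) = cstar B ** (cstar A ** (A ** B ** W2))"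
    by (rule cl_star)
  hence "cstar (A ** B) ** ((A ** B) ** W1) = cstar (A ** B) ** ((A ** B) ** W2)"
    by (simp add: matrix_mul_assoc cstar_mult)
  thus ?thesis by (rule cl_star)
qed

lemma cr_sBsBC:
  assumes h: "W1 ** (B ** C) ** cstar (cstar B ** B ** C) = W2 ** (B ** C) ** cstar (cstar B ** B ** C)"
  shows "W1 ** (B ** C) = W2 ** (B ** C)"
proof -
  have "(W1 ** (B ** C) ** cstar C) ** cstar B ** cstar (cstar B) =
        (W2 ** (B ** C) ** cstar C) ** cstar B ** cstar (cstar B)"
    using h by (simp add: matrix_mul_assoc cstar_mult)
  hence "W1 ** (B ** C) ** cstar C ** cstar B = W2 ** (B ** C) ** cstar C ** cstar B"
    by (rule cr_star)
  hence "W1 ** (B ** C) ** cstar (B ** C) = W2 ** (B ** C) ** cstar (B ** C)"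
    by (simp add: matrix_mul_assoc cstar_mult)
  thus ?thesis by (rule cr_star)
qed

lemma left12:
  fixes M :: "complex^'q^'m" and K :: "complex^'k^'m" and R :: "complex^'q^'k"
    and P :: "complex^'m^'r"
  assumes e: "M = K ** R"
    and c: "\<And>W1 W2 :: complex^'q^'k. P ** (K ** W1) = P ** (K ** W2) \<Longrightarrow> K ** W1 = K ** W2"
    and g: "G \<in> inv12 (P ** M)"
  shows "G ** P \<in> inv12 M"
proof -
  have g1: "P ** M ** G ** (P ** M) = P ** M" and g2: "G ** (P ** M) ** G = G"
    using g by (auto simp: inv12_def)
  have "P ** (K ** (R ** G ** P ** M)) = P ** (K ** R)"
    using g1 e by (simp add: matrix_mul_assoc)
  hence "K ** (R ** G ** P ** M) = K ** R" by (rule c)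
  hence e1: "M ** (G ** P) ** M = M" using e by (simp add: matrix_mul_assoc)
  have e2: "G ** P ** M ** (G ** P) = G ** P" using g2 by (simp add: matrix_mul_assoc)
  show ?thesis using e1 e2 by (simp add: inv12_def)
qed

lemma right12:
  fixes M :: "complex^'q^'m" and K :: "complex^'q^'k" and R :: "complex^'k^'m"
    and Q :: "complex^'s^'q"
  assumes e: "M = R ** K"
    and c: "\<And>W1 W2 :: complex^'k^'m. W1 ** K ** Q = W2 ** K ** Q \<Longrightarrow> W1 ** K = W2 ** K"
    and g: "G \<in> inv12 (M ** Q)"
  shows "Q ** G \<in> inv12 M"
proof -
  have g1: "M ** Q ** G ** (M ** Q) = M ** Q" and g2: "G ** (M ** Q) ** G = G"
    using g by (auto simp: inv12_def)
  have "(M ** Q ** G ** R) ** K ** Q = R ** K ** Q"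
    using g1 e by (simp add: matrix_mul_assoc)
  hence "(M ** Q ** G ** R) ** K = R ** K" by (rule c)
  hence e1: "M ** (Q ** G) ** M = M" using e by (simp add: matrix_mul_assoc)
  have "Q ** G ** M ** (Q ** G) = Q ** (G ** (M ** Q) ** G)" by (simp add: matrix_mul_assoc)
  hence e2: "Q ** G ** M ** (Q ** G) = Q ** G" using g2 by simp
  show ?thesis using e1 e2 by (simp add: inv12_def)
qed

lemma both12:
  fixes M :: "complex^'q^'m" and K :: "complex^'k^'m" and R :: "complex^'q^'k"
    and R' :: "complex^'k2^'m" and K' :: "complex^'q^'k2"
    and P :: "complex^'m^'r" and Q :: "complex^'s^'q"
  assumes e: "M = K ** R" and e': "M = R' ** K'"
    and c: "\<And>W1 W2 :: complex^'s^'k. P ** (K ** W1) = P ** (K ** W2) \<Longrightarrow> K ** W1 = K ** W2"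
    and c': "\<And>W1 W2 :: complex^'k2^'m. W1 ** K' ** Q = W2 ** K' ** Q \<Longrightarrow> W1 ** K' = W2 ** K'"
    and g: "G \<in> inv12 (P ** M ** Q)"
  shows "Q ** G ** P \<in> inv12 M"
proof -
  have g1: "P ** M ** Q ** G ** (P ** M ** Q) = P ** M ** Q" and g2: "G ** (P ** M ** Q) ** G = G"
    using g by (auto simp: inv12_def)
  have "P ** (K ** (R ** Q ** G ** P ** M ** Q)) = P ** (K ** (R ** Q))"
    using g1 e by (simp add: matrix_mul_assoc)
  hence "K ** (R ** Q ** G ** P ** M ** Q) = K ** (R ** Q)" by (rule c)
  hence s1: "M ** Q ** G ** P ** M ** Q = M ** Q" using e by (simp add: matrix_mul_assoc)
  have "(M ** Q ** G ** P ** R') ** K' ** Q = R' ** K' ** Q"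
    using s1 e' by (simp add: matrix_mul_assoc)
  hence "(M ** Q ** G ** P ** R') ** K' = R' ** K'" by (rule c')
  hence e1: "M ** (Q ** G ** P) ** M = M" using e' by (simp add: matrix_mul_assoc)
  have "Q ** G ** P ** M ** (Q ** G ** P) = Q ** (G ** (P ** M ** Q) ** G) ** P" by (simp add: matrix_mul_assoc)
  hence e2: "Q ** G ** P ** M ** (Q ** G ** P) = Q ** G ** P" using g2 by simp
  show ?thesis using e1 e2 by (simp add: inv12_def)
qed

theorem theorem3p3:
  fixes A :: "complex^'n^'m" and B :: "complex^'p^'n" and C :: "complex^'q^'p"
    and M :: "complex^'q^'m"
  assumes hM: "M = A ** B ** C"
  shows
   "{G ** A1 | A1 G. A1 \<in> inv12 A \<and> G \<in> inv12 (A1 ** M)} \<subseteq> inv12 M \<and>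
    {C1 ** G | C1 G. C1 \<in> inv12 C \<and> G \<in> inv12 (M ** C1)} \<subseteq> inv12 M \<and>
    {G ** cstar A | G. G \<in> inv12 (cstar A ** M)} \<subseteq> inv12 M \<and>
    {cstar C ** G | G. G \<in> inv12 (M ** cstar C)} \<subseteq> inv12 M \<and>
    {G ** (A ** cstar A) | G. G \<in> inv12 (A ** cstar A ** M)} \<subseteq> inv12 M \<and>
    {cstar C ** C ** G | G. G \<in> inv12 (M ** cstar C ** C)} \<subseteq> inv12 M \<and>
    {C1 ** G ** A1 | A1 C1 G. A1 \<in> inv12 A \<and> C1 \<in> inv12 C \<and> G \<in> inv12 (A1 ** M ** C1)}
       \<subseteq> inv12 M \<and>
    {cstar C ** G ** cstar A | G. G \<in> inv12 (cstar A ** M ** cstar C)} \<subseteq> inv12 M \<and>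
    {G ** X | X G. X \<in> inv12 (A ** B) \<and> G \<in> inv12 (X ** M)} \<subseteq> inv12 M \<and>
    {X ** G | X G. X \<in> inv12 (B ** C) \<and> G \<in> inv12 (M ** X)} \<subseteq> inv12 M \<and>
    {G ** cstar (A ** B) | G. G \<in> inv12 (cstar (A ** B) ** M)} \<subseteq> inv12 M \<and>
    {cstar (B ** C) ** G | G. G \<in> inv12 (M ** cstar (B ** C))} \<subseteq> inv12 M \<and>
    {G ** X | B1 X G. B1 \<in> inv12 B \<and> X \<in> inv12 (A ** B ** B1) \<and> G \<in> inv12 (X ** M)}
       \<subseteq> inv12 M \<and>
    {X ** G | B1 X G. B1 \<in> inv12 B \<and> X \<in> inv12 (B1 ** B ** C) \<and> G \<in> inv12 (M ** X)}
       \<subseteq> inv12 M \<and>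
    {G ** X | X G. X \<in> inv12 (A ** B ** cstar B) \<and> G \<in> inv12 (X ** M)} \<subseteq> inv12 M \<and>
    {X ** G | X G. X \<in> inv12 (cstar B ** B ** C) \<and> G \<in> inv12 (M ** X)} \<subseteq> inv12 M \<and>
    {cstar C ** C ** G ** (A ** cstar A) | G. G \<in> inv12 (A ** cstar A ** M ** cstar C ** C)}
       \<subseteq> inv12 M \<and>
    {Y ** G ** X | X Y G. X \<in> inv12 (A ** B) \<and> Y \<in> inv12 (B ** C) \<and> G \<in> inv12 (X ** M ** Y)}
       \<subseteq> inv12 M \<and>
    {cstar (B ** C) ** G ** cstar (A ** B) | G. G \<in> inv12 (cstar (A ** B) ** M ** cstar (B ** C))}
       \<subseteq> inv12 M \<and>
    {Y ** G ** X | B1 X Y G. B1 \<in> inv12 B \<and> X \<in> inv12 (A ** B ** B1) \<and>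
        Y \<in> inv12 (B1 ** B ** C) \<and> G \<in> inv12 (X ** M ** Y)} \<subseteq> inv12 M \<and>
    {cstar (B1 ** B ** C) ** G ** cstar (A ** B ** B1) | B1 G. B1 \<in> inv12 B \<and>
        G \<in> inv12 (cstar (A ** B ** B1) ** M ** cstar (B1 ** B ** C))} \<subseteq> inv12 M \<and>
    {Y ** G ** X | X Y G. X \<in> inv12 (A ** B ** cstar B) \<and> Y \<in> inv12 (cstar B ** B ** C) \<and>
        G \<in> inv12 (X ** M ** Y)} \<subseteq> inv12 M \<and>
    {cstar (cstar B ** B ** C) ** G ** cstar (A ** B ** cstar B) | G.
        G \<in> inv12 (cstar (A ** B ** cstar B) ** M ** cstar (cstar B ** B ** C))} \<subseteq> inv12 M"
proof -
  have eA: "M = A ** (B ** C)" using hM by (simp add: matrix_mul_assoc)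
  have eC: "M = (A ** B) ** C" using hM by simp
  have e13: "\<And>B1. B1 \<in> inv12 B \<Longrightarrow> M = (A ** B ** B1) ** (B ** C)"
  proof -
    fix B1 assume "B1 \<in> inv12 B"
    hence k: "B ** B1 ** B = B" by (simp add: inv12_def)
    have "(A ** B ** B1) ** (B ** C) = A ** (B ** B1 ** B) ** C" by (simp add: matrix_mul_assoc)
    thus "M = (A ** B ** B1) ** (B ** C)" using hM k by simp
  qed
  have e14: "\<And>B1. B1 \<in> inv12 B \<Longrightarrow> M = (A ** B) ** (B1 ** B ** C)"
  proof -
    fix B1 assume "B1 \<in> inv12 B"
    hence k: "B ** B1 ** B = B" by (simp add: inv12_def)
    have "(A ** B) ** (B1 ** B ** C) = A ** (B ** B1 ** B) ** C" by (simp add: matrix_mul_assoc)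
    thus "M = (A ** B) ** (B1 ** B ** C)" using hM k by simp
  qed
  show ?thesis
    apply (intro conjI subsetI; elim CollectE exE conjE; hypsubst)
    subgoal premises h by (rule left12[OF eA cl_inv[OF h(1)] h(2)])
    subgoal premises h by (rule right12[OF eC cr_inv[OF h(1)] h(2)])
    subgoal premises h by (rule left12[OF eA cl_star h(1)])
    subgoal premises h by (rule right12[OF eC cr_star h(1)])
    subgoal premises h by (rule left12[OF eA cl_AAs h(1)])
    subgoal premises h apply (rule right12[OF eC cr_CsC]) using h by (simp_all add: matrix_mul_assoc)
    subgoal premises h by (rule both12[OF eA eC cl_inv[OF h(1)] cr_inv[OF h(2)] h(3)])
    subgoal premises h by (rule both12[OF eA eC cl_star cr_star h(1)])
    subgoal premises h by (rule left12[OF eC cl_inv[OF h(1)] h(2)])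
    subgoal premises h by (rule right12[OF eA cr_inv[OF h(1)] h(2)])
    subgoal premises h by (rule left12[OF eC cl_star h(1)])
    subgoal premises h by (rule right12[OF eA cr_star h(1)])
    subgoal premises h by (rule left12[OF e13[OF h(1)] cl_inv[OF h(2)] h(3)])
    subgoal premises h by (rule right12[OF e14[OF h(1)] cr_inv[OF h(2)] h(3)])
    subgoal premises h by (rule left12[OF eC cl_XABBs[OF h(1)] h(2)])
    subgoal premises h by (rule right12[OF eA cr_sBBC[OF h(1)] h(2)])
    subgoal premises h apply (rule both12[OF eA eC cl_AAs cr_CsC]) using h by (simp_all add: matrix_mul_assoc)
    subgoal premises h by (rule both12[OF eC eA cl_inv[OF h(1)] cr_inv[OF h(2)] h(3)])
    subgoal premises h by (rule both12[OF eC eA cl_star cr_star h(1)])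
    subgoal premises h by (rule both12[OF e13[OF h(1)] e14[OF h(1)] cl_inv[OF h(2)] cr_inv[OF h(3)] h(4)])
    subgoal premises h by (rule both12[OF e13[OF h(1)] e14[OF h(1)] cl_star cr_star h(2)])
    subgoal premises h by (rule both12[OF eC eA cl_XABBs[OF h(1)] cr_sBBC[OF h(2)] h(3)])
    subgoal premises h by (rule both12[OF eC eA cl_sABBs cr_sBsBC h(1)])
    done
qed

end
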